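(* Let $\sigma$ be a signature, $\Delta$ a set of $\mathcal{CO}[\sigma]$-formulas and $\varphi$ a $\mathcal{COD}[\sigma]$-formula. Then $\Delta\models^g\varphi$ if and only if $\Delta\models^g\varphi^\ast_f$ for some full instantiation $\varphi^\ast_f$ of $\varphi^\ast$.
   Context: A signature $\sigma=(\mathrm{Dom},\mathrm{Ran})$: $\mathrm{Dom}$ nonempty finite set of variables, each with nonempty finite range $\mathrm{Ran}(X)$; $\mathbf X=\mathbf x$ abbreviates $X_1=x_1\wedge\dots\wedge X_n=x_n$ ($\mathbf x\in\mathrm{Ran}(\mathbf X)=\prod\mathrm{Ran}(X_i)$), inconsistent if it contains $X=x,X=x'$ with $x\ne x'$. $\mathcal{CO}[\sigma]$: $\alpha::=X=x\mid\neg\alpha\mid\alpha\wedge\alpha\mid\alpha\vee\alpha\mid\mathbf X=\mathbf x\;\Box\!\!\rightarrow\alpha$. $\mathcal{COD}[\sigma]$: $\varphi::=X=x\mid{=}(\mathbf X;Y)\mid\neg\alpha\mid\varphi\wedge\varphi\mid\varphi\vee\varphi\mid\mathbf X=\mathbf x\;\Box\!\!\rightarrow\varphi$ ($\alpha\in\mathcal{CO}[\sigma]$); ${=}(Y)$ is ${=}(\mathbf X;Y)$ with empty $\mathbf X$ (constancy atom). Systems of functions $\mathcal F$: for each $V\in\mathrm{En}(\mathcal F)\subseteq\mathrm{Dom}$ parents $PA^{\mathcal F}_V\subseteq\mathrm{Dom}\setminus\{V\}$ and $\mathcal F_V:\mathrm{Ran}(PA^{\mathcal F}_V)\to\mathrm{Ran}(V)$;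 $\mathrm{Ex}(\mathcal F)=\mathrm{Dom}\setminus\mathrm{En}(\mathcal F)$; only recursive (acyclic parent graph). An assignment $s$ is compatible with $\mathcal F$ if $s(V)=\mathcal F_V(s(PA^{\mathcal F}_V))$ for $V\in\mathrm{En}(\mathcal F)$. A generalized causal team is a set $T$ of compatible pairs $(s,\mathcal F)$; $T^-=\{s:(s,\mathcal F)\in T\}$. For consistent $\mathbf X=\mathbf x$: $\mathcal F_{\mathbf X=\mathbf x}$ restricts $\mathcal F$ to $\mathrm{En}(\mathcal F)\setminus\mathbf X$; $s^{\mathcal F}_{\mathbf X=\mathbf x}$: $X_i\mapsto x_i$, $V\mapsto s(V)$ on $\mathrm{Ex}(\mathcal F)\setminus\mathbf X$, $V\mapsto\mathcal F_V(s^{\mathcal F}_{\mathbf X=\mathbf x}(PA^{\mathcal F}_V))$ on $\mathrm{En}(\mathcal F)\setminus\mathbf X$; $T_{\mathbf X=\mathbf x}=\{(s^{\mathcal F}_{\mathbf X=\mathbf x},\mathcal F_{\mathbf X=\mathbf x}):(s,\mathcal F)\in T\}$. $\models^g$: $T\models X=x$ iff $s(X)=x$ for all $s\in T^-$; $T\models{=}(\mathbf X;Y)$ iff for all $s,s'\in T^-$, $s(\mathbf X)=s'(\mathbf X)$ implies $s(Y)=s'(Y)$; $T\models\neg\alpha$ iff $\{(s,\mathcal F)\}\not\models\alpha$ for all $(s,\mathcal F)\in T$; $\wedge$ classical; $T\models\varphi\vee\psi$ iff $T=T_1\cup T_2$ with $T_1\models\varphi$, $T_2\models\psi$; $T\models\mathbf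 X=\mathbf x\;\Box\!\!\rightarrow\varphi$ iff $\mathbf X=\mathbf x$ inconsistent or $T_{\mathbf X=\mathbf x}\models\varphi$. $\Delta\models^g\varphi$: every generalized causal team over $\sigma$ satisfying all of $\Delta$ satisfies $\varphi$. $\varphi^\ast$ is obtained from $\varphi$ by replacing every occurrence of a dependence atom ${=}(\mathbf X;Y)$ by $\bigvee_{\mathbf x\in\mathrm{Ran}(\mathbf X)}(\mathbf X=\mathbf x\wedge{=}(Y))$ (so all dependence atoms in $\varphi^\ast$ are constancy atoms). Let $\mathbf d=\langle[{=}(X_1),k_1],\dots,[{=}(X_n),k_n]\rangle$ list all occurrences of constancy atoms in $\varphi^\ast$ ($[{=}(X_i),k_i]$ the $k_i$-th occurrence of ${=}(X_i)$). An instantiating function is $f:\{1,\dots,n\}\to\bigcup_i\mathrm{Ran}(X_i)$ with $f(i)\in\mathrm{Ran}(X_i)$; the full instantiation $\varphi^\ast_f$ is obtained from $\varphi^\ast$ by replacing each occurrence $[{=}(X_i),k_i]$ by $X_i=f(i)$ (a $\mathcal{CO}[\sigma]$-formula). *)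

theory Defs
  imports Main "HOL-Library.FuncSet"
begin

definition signature :: "'v set \<Rightarrow> ('v \<Rightarrow> 'a set) \<Rightarrow> bool" where
  "signature Dom Ran \<longleftrightarrow> finite Dom \<and> Dom \<noteq> {} \<and>
     (\<forall>X\<in>Dom. finite (Ran X) \<and> Ran X \<noteq> {})"

text \<open>A conjunction X1=x1 and ... and Xn=xn is represented by a list of pairs.
  Dep Xs Y is the dependence atom =(Xs;Y); Dep [] Y is the constancy atom =(Y).
  Cf xs phi is the counterfactual (xs box-arrow phi).\<close>

datatype ('v, 'a) form =
    Eq 'v 'a
  | Dep "'v list" 'v
  | Neg "('v, 'a) form"
  | And "('v, 'a) form" "('v, 'a) form"
  | Or "('v, 'a) form" "('v, 'a) form"
  | Cf "('v \<times> 'a) list" "('v, 'a) form"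

definition wf_asgn :: "'v set \<Rightarrow> ('v \<Rightarrow> 'a set) \<Rightarrow> ('v \<times> 'a) list \<Rightarrow> bool" where
  "wf_asgn Dom Ran xs \<longleftrightarrow> (\<forall>(X, x)\<in>set xs. X \<in> Dom \<and> x \<in> Ran X)"

fun is_CO :: "'v set \<Rightarrow> ('v \<Rightarrow> 'a set) \<Rightarrow> ('v, 'a) form \<Rightarrow> bool" where
  "is_CO Dom Ran (Eq X x) \<longleftrightarrow> X \<in> Dom \<and> x \<in> Ran X"
| "is_CO Dom Ran (Dep Xs Y) \<longleftrightarrow> False"
| "is_CO Dom Ran (Neg a) \<longleftrightarrow> is_CO Dom Ran a"
| "is_CO Dom Ran (And a b) \<longleftrightarrow> is_CO Dom Ran a \<and> is_CO Dom Ran b"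
| "is_CO Dom Ran (Or a b) \<longleftrightarrow> is_CO Dom Ran a \<and> is_CO Dom Ran b"
| "is_CO Dom Ran (Cf xs a) \<longleftrightarrow> wf_asgn Dom Ran xs \<and> is_CO Dom Ran a"

fun is_COD :: "'v set \<Rightarrow> ('v \<Rightarrow> 'a set) \<Rightarrow> ('v, 'a) form \<Rightarrow> bool" where
  "is_COD Dom Ran (Eq X x) \<longleftrightarrow> X \<in> Dom \<and> x \<in> Ran X"
| "is_COD Dom Ran (Dep Xs Y) \<longleftrightarrow> set Xs \<subseteq> Dom \<and> Y \<in> Dom"
| "is_COD Dom Ran (Neg a) \<longleftrightarrow> is_CO Dom Ran a"
| "is_COD Dom Ran (And a b) \<longleftrightarrow> is_COD Dom Ran a \<and> is_COD Dom Ran b"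
| "is_COD Dom Ran (Or a b) \<longleftrightarrow> is_COD Dom Ran a \<and> is_COD Dom Ran b"
| "is_COD Dom Ran (Cf xs a) \<longleftrightarrow> wf_asgn Dom Ran xs \<and> is_COD Dom Ran a"

definition consistent :: "('v \<times> 'a) list \<Rightarrow> bool" where
  "consistent xs \<longleftrightarrow> (\<forall>(X, x)\<in>set xs. \<forall>(X', x')\<in>set xs. X = X' \<longrightarrow> x = x')"

text \<open>Components for exogenous variables
  and arguments outside Ran(PA V) are fixed to trivial values, so that
  records correspond one-to-one to systems of functions.\<close>

record ('v, 'a) sysf =
  En :: "'v set"
  PA :: "'v \<Rightarrow> 'v set"
  Fn :: "'v \<Rightarrow> ('v \<Rightarrow> 'a) \<Rightarrow> 'a"

definition parent_rel :: "('v, 'a) sysf \<Rightarrow> ('v \<times> 'v) set" where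
  "parent_rel F = {(P, V). V \<in> En F \<and> P \<in> PA F V}"

definition sys_of_funs :: "'v set \<Rightarrow> ('v \<Rightarrow> 'a set) \<Rightarrow> ('v, 'a) sysf \<Rightarrow> bool" where
  "sys_of_funs Dom Ran F \<longleftrightarrow>
     En F \<subseteq> Dom \<and>
     (\<forall>V. V \<notin> En F \<longrightarrow> PA F V = {} \<and> Fn F V = (\<lambda>_. undefined)) \<and>
     (\<forall>V\<in>En F. PA F V \<subseteq> Dom - {V} \<and>
        (\<forall>t\<in>PiE (PA F V) Ran. Fn F V t \<in> Ran V) \<and>
        (\<forall>t. t \<notin> PiE (PA F V) Ran \<longrightarrow> Fn F V t = undefined)) \<and>
     acyclic (parent_rel F)"

definition compatible :: "'v set \<Rightarrow> ('v \<Rightarrow> 'a set) \<Rightarrow> ('v \<Rightarrow> 'a) \<Rightarrow> ('v, 'a) sysf \<Rightarrow> bool" where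
  "compatible Dom Ran s F \<longleftrightarrow> s \<in> PiE Dom Ran \<and>
     (\<forall>V\<in>En F. s V = Fn F V (restrict s (PA F V)))"

type_synonym ('v, 'a) team = "(('v \<Rightarrow> 'a) \<times> ('v, 'a) sysf) set"

definition gen_causal_team :: "'v set \<Rightarrow> ('v \<Rightarrow> 'a set) \<Rightarrow> ('v, 'a) team \<Rightarrow> bool" where
  "gen_causal_team Dom Ran T \<longleftrightarrow>
     (\<forall>(s, F)\<in>T. sys_of_funs Dom Ran F \<and> compatible Dom Ran s F)"

definition interv_asg :: "('v \<times> 'a) list \<Rightarrow> ('v, 'a) sysf \<Rightarrow> ('v \<Rightarrow> 'a) \<Rightarrow> ('v \<Rightarrow> 'a)" where
  "interv_asg xs F s = (THE g. \<forall>V. g V =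
     (case map_of xs V of
        Some x \<Rightarrow> x
      | None \<Rightarrow> (if V \<in> En F then Fn F V (restrict g (PA F V)) else s V)))"

definition interv_sys :: "('v \<times> 'a) list \<Rightarrow> ('v, 'a) sysf \<Rightarrow> ('v, 'a) sysf" where
  "interv_sys xs F =
     \<lparr> En = En F - fst ` set xs,
       PA = (\<lambda>V. if V \<in> En F - fst ` set xs then PA F V else {}),
       Fn = (\<lambda>V. if V \<in> En F - fst ` set xs then Fn F V else (\<lambda>_. undefined)) \<rparr>"

definition interv_team :: "('v \<times> 'a) list \<Rightarrow> ('v, 'a) team \<Rightarrow> ('v, 'a) team" where
  "interv_team xs T = (\<lambda>(s, F). (interv_asg xs F s, interv_sys xs F)) ` T"

primrec sat :: "('v, 'a) form \<Rightarrow> ('v, 'a) team \<Rightarrow> bool" where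
  "sat (Eq X x) T \<longleftrightarrow> (\<forall>(s, F)\<in>T. s X = x)"
| "sat (Dep Xs Y) T \<longleftrightarrow> (\<forall>(s, F)\<in>T. \<forall>(s', F')\<in>T.
      (\<forall>X\<in>set Xs. s X = s' X) \<longrightarrow> s Y = s' Y)"
| "sat (Neg a) T \<longleftrightarrow> (\<forall>p\<in>T. \<not> sat a {p})"
| "sat (And a b) T \<longleftrightarrow> sat a T \<and> sat b T"
| "sat (Or a b) T \<longleftrightarrow> (\<exists>T1 T2. T = T1 \<union> T2 \<and> sat a T1 \<and> sat b T2)"
| "sat (Cf xs a) T \<longleftrightarrow> \<not> consistent xs \<or> sat a (interv_team xs T)"

definition entails :: "'v set \<Rightarrow> ('v \<Rightarrow> 'a set) \<Rightarrow> ('v, 'a) form set \<Rightarrow> ('v, 'a) form \<Rightarrow> bool" where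
  "entails Dom Ran \<Delta> \<phi> \<longleftrightarrow>
     (\<forall>T. gen_causal_team Dom Ran T \<longrightarrow> (\<forall>\<delta>\<in>\<Delta>. sat \<delta> T) \<longrightarrow> sat \<phi> T)"

fun big_conj_eq :: "('v \<times> 'a) list \<Rightarrow> ('v, 'a) form \<Rightarrow> ('v, 'a) form" where
  "big_conj_eq [] c = c"
| "big_conj_eq ((X, x) # ps) c = And (Eq X x) (big_conj_eq ps c)"

fun big_disj :: "('v, 'a) form list \<Rightarrow> ('v, 'a) form" where
  "big_disj [] = undefined"
| "big_disj [a] = a"
| "big_disj (a # b # as) = Or a (big_disj (b # as))"

definition enum_ran :: "('v \<Rightarrow> 'a set) \<Rightarrow> 'v \<Rightarrow> 'a list" where
  "enum_ran Ran X = (SOME l. distinct l \<and> set l = Ran X)"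

primrec star :: "('v \<Rightarrow> 'a set) \<Rightarrow> ('v, 'a) form \<Rightarrow> ('v, 'a) form" where
  "star Ran (Eq X x) = Eq X x"
| "star Ran (Dep Xs Y) = (if Xs = [] then Dep [] Y else
     big_disj (map (\<lambda>xs. big_conj_eq (zip Xs xs) (Dep [] Y))
                   (product_lists (map (enum_ran Ran) Xs))))"
| "star Ran (Neg a) = Neg (star Ran a)"
| "star Ran (And a b) = And (star Ran a) (star Ran b)"
| "star Ran (Or a b) = Or (star Ran a) (star Ran b)"
| "star Ran (Cf xs a) = Cf xs (star Ran a)"

primrec const_occs :: "('v, 'a) form \<Rightarrow> 'v list" where
  "const_occs (Eq X x) = []"
| "const_occs (Dep Xs Y) = (if Xs = [] then [Y] else [])"
| "const_occs (Neg a) = const_occs a"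
| "const_occs (And a b) = const_occs a @ const_occs b"
| "const_occs (Or a b) = const_occs a @ const_occs b"
| "const_occs (Cf xs a) = const_occs a"

definition inst_fun :: "('v \<Rightarrow> 'a set) \<Rightarrow> ('v, 'a) form \<Rightarrow> (nat \<Rightarrow> 'a) \<Rightarrow> bool" where
  "inst_fun Ran \<phi> f \<longleftrightarrow>
     (\<forall>i\<in>{1..length (const_occs \<phi>)}. f i \<in> Ran (const_occs \<phi> ! (i - 1)))"

text \<open>full_inst f k phi replaces the j-th constancy-atom occurrence of phi,
  =(X), by X = f (k + j).\<close>
primrec full_inst :: "(nat \<Rightarrow> 'a) \<Rightarrow> nat \<Rightarrow> ('v, 'a) form \<Rightarrow> ('v, 'a) form" where
  "full_inst f k (Eq X x) = Eq X x"
| "full_inst f k (Dep Xs Y) = (if Xs = [] then Eq Y (f (Suc k)) else Dep Xs Y)"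
| "full_inst f k (Neg a) = Neg (full_inst f k a)"
| "full_inst f k (And a b) = And (full_inst f k a) (full_inst f (k + length (const_occs a)) b)"
| "full_inst f k (Or a b) = Or (full_inst f k a) (full_inst f (k + length (const_occs a)) b)"
| "full_inst f k (Cf xs a) = Cf xs (full_inst f k a)"

end

theory Submission
  imports Defs
begin

fun nodep :: "('v,'a) form \<Rightarrow> bool" where
  "nodep (Eq X x) = True"
| "nodep (Dep Xs Y) = False"
| "nodep (Neg a) = nodep a"
| "nodep (And a b) = (nodep a \<and> nodep b)"
| "nodep (Or a b) = (nodep a \<and> nodep b)"
| "nodep (Cf xs a) = nodep a"

fun wfp :: "'v set \<Rightarrow> ('v \<Rightarrow> 'a set) \<Rightarrow> ('v,'a) form \<Rightarrow> bool" where
  "wfp D R (Eq X x) = True"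
| "wfp D R (Dep Xs Y) = (Xs = [] \<and> Y \<in> D)"
| "wfp D R (Neg a) = nodep a"
| "wfp D R (And a b) = (wfp D R a \<and> wfp D R b)"
| "wfp D R (Or a b) = (wfp D R a \<and> wfp D R b)"
| "wfp D R (Cf xs a) = (wf_asgn D R xs \<and> wfp D R a)"

lemma CO_nodep: "is_CO D R a \<Longrightarrow> nodep a" by (induction a) auto
lemma nodep_star: "nodep a \<Longrightarrow> star R a = a" by (induction a) auto
lemma nodep_occs: "nodep a \<Longrightarrow> const_occs a = []" by (induction a) auto
lemma nodep_inst: "nodep a \<Longrightarrow> full_inst f k a = a"
  by (induction a arbitrary: k) (auto simp: nodep_occs)
lemma wfp_inst_nodep: "wfp D R a \<Longrightarrow> nodep (full_inst f k a)"
  by (induction a arbitrary: k) (auto simp: nodep_inst)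
lemma wfp_occs: "wfp D R a \<Longrightarrow> set (const_occs a) \<subseteq> D"
  by (induction a) (auto simp: nodep_occs)

lemma interv_team_single:
  "interv_team xs {(s,F)} = {(interv_asg xs F s, interv_sys xs F)}"
  by (simp add: interv_team_def)

lemma flat: "nodep a \<Longrightarrow> sat a T \<longleftrightarrow> (\<forall>p\<in>T. sat a {p})"
proof (induction a arbitrary: T)
  case (Eq X x) show ?case by auto
next
  case (Dep Xs Y) then show ?case by simp
next
  case (Neg a) show ?case by simp
next
  case (And a b)
  have 1: "sat a T \<longleftrightarrow> (\<forall>p\<in>T. sat a {p})" using And.IH(1)[of T] And.prems by simp
  have 2: "sat b T \<longleftrightarrow> (\<forall>p\<in>T. sat b {p})" using And.IH(2)[of T] And.prems by simp
  show ?case using 1 2 by (simp add: ball_conj_distrib)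
next
  case (Or a b)
  have IHa: "sat a U \<longleftrightarrow> (\<forall>p\<in>U. sat a {p})" for U using Or.IH(1)[of U] Or.prems by simp
  have IHb: "sat b U \<longleftrightarrow> (\<forall>p\<in>U. sat b {p})" for U using Or.IH(2)[of U] Or.prems by simp
  show ?case
  proof
    assume "sat (Or a b) T"
    then obtain T1 T2 where T: "T = T1 \<union> T2" "sat a T1" "sat b T2" by auto
    have ea: "sat a {}" and eb: "sat b {}" using IHa[of "{}"] IHb[of "{}"] by auto
    show "\<forall>p\<in>T. sat (Or a b) {p}"
    proof
      fix p assume "p \<in> T"
      then have "p \<in> T1 \<or> p \<in> T2" using T(1) by blast
      then show "sat (Or a b) {p}"
      proof
        assume "p \<in> T1" then have "sat a {p}" using IHa[of T1] T by blast
        then show ?thesis using eb unfolding sat.simps(5) by (intro exI[of _ "{p}"] exI[of _ "{}"]) simp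
      next
        assume "p \<in> T2" then have "sat b {p}" using IHb[of T2] T by blast
        then show ?thesis using ea unfolding sat.simps(5) by (intro exI[of _ "{}"] exI[of _ "{p}"]) simp
      qed
    qed
  next
    assume H: "\<forall>p\<in>T. sat (Or a b) {p}"
    have ab: "\<forall>p\<in>T. sat a {p} \<or> sat b {p}"
    proof
      fix p assume "p \<in> T"
      then obtain U1 U2 where U: "{p} = U1 \<union> U2" "sat a U1" "sat b U2" using H by auto
      then have "U1 = {p} \<or> U2 = {p}" by blast
      then show "sat a {p} \<or> sat b {p}" using U(2,3) by metis
    qed
    have "sat a {p\<in>T. sat a {p}}" by (subst IHa) simp
    moreover have "sat b {p\<in>T. sat b {p}}" by (subst IHb) simp
    moreover have "T = {p\<in>T. sat a {p}} \<union> {p\<in>T. sat b {p}}" using ab by blast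
    ultimately show "sat (Or a b) T" by (simp only: sat.simps) blast
  qed
next
  case (Cf xs a)
  have IH: "sat a U \<longleftrightarrow> (\<forall>p\<in>U. sat a {p})" for U using Cf.IH[of U] Cf.prems by simp
  have "interv_team xs T = (\<Union>p\<in>T. interv_team xs {p})" by (auto simp: interv_team_def)
  then have "sat a (interv_team xs T) \<longleftrightarrow> (\<forall>p\<in>T. sat a (interv_team xs {p}))"
    by (subst IH, subst (2) IH) auto
  then show ?case by auto
qed

lemma inst_mono: "wfp D R a \<Longrightarrow> sat (full_inst f k a) T \<Longrightarrow> sat a T"
proof (induction a arbitrary: k T)
  case (Or a b) then show ?case by fastforce
next
  case (Neg a) then show ?case by (simp add: nodep_inst)
next
  case (Dep Xs Y)
  then have x: "Xs = []" and h: "\<forall>p\<in>T. fst p Y = f (Suc k)" by (auto simp: case_prod_beta)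
  then show ?case by (simp add: case_prod_beta)
qed auto

definition good :: "'v set \<Rightarrow> ('v \<Rightarrow> 'a set) \<Rightarrow> ('v, 'a) team \<Rightarrow> bool" where
  "good D R T \<longleftrightarrow> (\<forall>(s, F)\<in>T. s \<in> PiE D R \<and> sys_of_funs D R F)"

lemma good_subset: "good D R T \<Longrightarrow> T' \<subseteq> T \<Longrightarrow> good D R T'"
  unfolding good_def by blast

lemma gct_good: "gen_causal_team D R T \<Longrightarrow> good D R T"
  unfolding good_def gen_causal_team_def compatible_def by auto

lemma wf_parent: "finite D \<Longrightarrow> sys_of_funs D R F \<Longrightarrow> wf (parent_rel F)"
proof -
  assume fin: "finite D" and sf: "sys_of_funs D R F"
  have "parent_rel F \<subseteq> D \<times> D" using sf unfolding sys_of_funs_def parent_rel_def by blast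
  then have "finite (parent_rel F)" by (rule finite_subset) (use fin in simp)
  moreover have "acyclic (parent_rel F)" using sf unfolding sys_of_funs_def by blast
  ultimately show ?thesis by (rule finite_acyclic_wf)
qed

lemma interv_asg_eq:
  assumes wf: "wf (parent_rel F)"
  shows "\<forall>V. interv_asg xs F s V = (case map_of xs V of Some x \<Rightarrow> x
      | None \<Rightarrow> (if V \<in> En F then Fn F V (restrict (interv_asg xs F s) (PA F V)) else s V))"
proof -
  define H where "H = (\<lambda>g V. case map_of xs V of Some x \<Rightarrow> x
      | None \<Rightarrow> (if V \<in> En F then Fn F V (restrict g (PA F V)) else s V))"
  let ?R = "parent_rel F"
  define g0 where "g0 = wfrec ?R H"
  have ex: "\<forall>V. g0 V = H g0 V"
  proof
    fix V
    have "g0 V = H (cut g0 ?R V) V" unfolding g0_def by (rule wfrec[OF wf])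
    also have "\<dots> = H g0 V"
    proof -
      have "restrict (cut g0 ?R V) (PA F V) = restrict g0 (PA F V)" if "V \<in> En F"
        using that by (auto simp: restrict_def cut_def parent_rel_def)
      then show ?thesis by (auto simp: H_def split: option.split)
    qed
    finally show "g0 V = H g0 V" .
  qed
  have uniq: "g = g0" if g: "\<forall>V. g V = H g V" for g
  proof
    fix V show "g V = g0 V"
    proof (induction V rule: wf_induct[OF wf])
      case (1 V)
      have r: "V \<in> En F \<Longrightarrow> restrict g (PA F V) = restrict g0 (PA F V)"
        using 1 by (auto simp: restrict_def parent_rel_def)
      have "g V = H g V" "g0 V = H g0 V" using g ex by auto
      then show ?case using r by (auto simp: H_def split: option.split)
    qed
  qed
  have "\<forall>V. (THE g. \<forall>V. g V = H g V) V = H (THE g. \<forall>V. g V = H g V) V"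
    by (rule theI[of "\<lambda>g. \<forall>V. g V = H g V", OF ex uniq])
  then show ?thesis unfolding interv_asg_def H_def .
qed

lemma interv_asg_PiE:
  assumes fin: "finite D" and sf: "sys_of_funs D R F" and s: "s \<in> PiE D R"
    and wa: "wf_asgn D R xs"
  shows "interv_asg xs F s \<in> PiE D R"
proof -
  have wf: "wf (parent_rel F)" using wf_parent fin sf by blast
  let ?g = "interv_asg xs F s"
  note eq = interv_asg_eq[OF wf, of xs s, rule_format]
  have "(V \<in> D \<longrightarrow> ?g V \<in> R V) \<and> (V \<notin> D \<longrightarrow> ?g V = undefined)" for V
  proof (induction V rule: wf_induct[OF wf])
    case (1 V)
    show ?case
    proof (cases "map_of xs V")
      case (Some x)
      then have "(V, x) \<in> set xs" by (rule map_of_SomeD)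
      then show ?thesis using wa eq[of V] Some unfolding wf_asgn_def by auto
    next
      case None
      show ?thesis
      proof (cases "V \<in> En F")
        case True
        have VD: "V \<in> D" and PA: "PA F V \<subseteq> D - {V}"
          and Fn: "\<forall>t\<in>PiE (PA F V) R. Fn F V t \<in> R V"
          using sf True unfolding sys_of_funs_def by auto
        have "restrict ?g (PA F V) \<in> PiE (PA F V) R"
        proof
          fix P assume P: "P \<in> PA F V"
          then have "(P, V) \<in> parent_rel F" using True by (auto simp: parent_rel_def)
          then show "restrict ?g (PA F V) P \<in> R P" using 1 P PA by auto
        qed auto
        then show ?thesis using eq[of V] None True VD Fn by auto
      next
        case False
        then show ?thesis using eq[of V] None s by (auto simp: PiE_def extensional_def)
      qed
    qed
  qed
  then show ?thesis by (auto simp: PiE_def extensional_def)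
qed

lemma interv_sys_ok: "sys_of_funs D R F \<Longrightarrow> sys_of_funs D R (interv_sys xs F)"
proof -
  assume sf: "sys_of_funs D R F"
  let ?E = "En F - fst ` set xs"
  have E: "En (interv_sys xs F) = ?E"
    and P: "PA (interv_sys xs F) = (\<lambda>V. if V \<in> ?E then PA F V else {})"
    and Fn: "Fn (interv_sys xs F) = (\<lambda>V. if V \<in> ?E then Fn F V else (\<lambda>_. undefined))"
    by (simp_all add: interv_sys_def)
  have "parent_rel (interv_sys xs F) \<subseteq> parent_rel F"
    unfolding parent_rel_def E P by auto
  then have ac: "acyclic (parent_rel (interv_sys xs F))"
    by (rule acyclic_subset[rotated]) (use sf in \<open>simp add: sys_of_funs_def\<close>)
  have s1: "En F \<subseteq> D" and s3: "\<forall>V\<in>En F. PA F V \<subseteq> D - {V} \<and>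
        (\<forall>t\<in>PiE (PA F V) R. Fn F V t \<in> R V) \<and>
        (\<forall>t. t \<notin> PiE (PA F V) R \<longrightarrow> Fn F V t = undefined)"
    using sf unfolding sys_of_funs_def by blast+
  show ?thesis unfolding sys_of_funs_def E P Fn
  proof (intro conjI)
    show "?E \<subseteq> D" using s1 by blast
    show "\<forall>V. V \<notin> ?E \<longrightarrow> (if V \<in> ?E then PA F V else {}) = {} \<and>
      (if V \<in> ?E then Fn F V else (\<lambda>_. undefined)) = (\<lambda>_. undefined)" by simp
    show "\<forall>V\<in>?E. (if V \<in> ?E then PA F V else {}) \<subseteq> D - {V} \<and>
        (\<forall>t\<in>PiE (if V \<in> ?E then PA F V else {}) R. (if V \<in> ?E then Fn F V else (\<lambda>_. undefined)) t \<in> R V) \<and>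
        (\<forall>t. t \<notin> PiE (if V \<in> ?E then PA F V else {}) R \<longrightarrow> (if V \<in> ?E then Fn F V else (\<lambda>_. undefined)) t = undefined)"
      using s3 by simp
  qed (use ac in \<open>simp add: E P\<close>)
qed

lemma good_interv:
  assumes fin: "finite D" and g: "good D R T" and wa: "wf_asgn D R xs"
  shows "good D R (interv_team xs T)"
  unfolding good_def
proof (rule ballI)
  fix q assume "q \<in> interv_team xs T"
  then obtain s F where sF: "(s, F) \<in> T" and q: "q = (interv_asg xs F s, interv_sys xs F)"
    unfolding interv_team_def by auto
  have "s \<in> PiE D R" "sys_of_funs D R F" using g sF unfolding good_def by auto
  then show "case q of (s, F) \<Rightarrow> s \<in> PiE D R \<and> sys_of_funs D R F"
    using q interv_asg_PiE[OF fin _ _ wa] interv_sys_ok by simp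
qed

lemma big_disj_intro:
  "P \<noteq> [] \<Longrightarrow> T = (\<Union>x\<in>set P. Tf x) \<Longrightarrow> \<forall>x\<in>set P. sat (g x) (Tf x)
   \<Longrightarrow> sat (big_disj (map g P)) T"
proof (induction P arbitrary: T)
  case Nil then show ?case by simp
next
  case (Cons x P)
  note IH = Cons.IH and pr = Cons.prems
  show ?case
  proof (cases "P = []")
    case True then show ?thesis using pr by simp
  next
    case False
    then obtain y rest where P: "P = y # rest" by (cases P) auto
    have "sat (big_disj (map g P)) (\<Union>x\<in>set P. Tf x)"
      using IH[of "\<Union>x\<in>set P. Tf x"] pr False by simp
    then have "sat (Or (g x) (big_disj (map g P))) T"
      unfolding sat.simps using pr
      by (intro exI[of _ "Tf x"] exI[of _ "\<Union>x\<in>set P. Tf x"]) auto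
    then show ?thesis using P by simp
  qed
qed

lemma big_disj_elim:
  "distinct P \<Longrightarrow> P \<noteq> [] \<Longrightarrow> sat (big_disj (map g P)) T
   \<Longrightarrow> \<exists>Tf. T = (\<Union>x\<in>set P. Tf x) \<and> (\<forall>x\<in>set P. sat (g x) (Tf x))"
proof (induction P arbitrary: T)
  case Nil then show ?case by simp
next
  case (Cons x P)
  note IH = Cons.IH and pr = Cons.prems
  show ?case
  proof (cases "P = []")
    case True then show ?thesis using pr by (intro exI[of _ "\<lambda>_. T"]) simp
  next
    case False
    then obtain y rest where P: "P = y # rest" by (cases P) auto
    have "sat (Or (g x) (big_disj (map g P))) T" using pr P by simp
    then obtain T1 T2 where T: "T = T1 \<union> T2" "sat (g x) T1" "sat (big_disj (map g P)) T2"
      by auto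
    obtain Tf where Tf: "T2 = (\<Union>x\<in>set P. Tf x)" "\<forall>x\<in>set P. sat (g x) (Tf x)"
      using IH[OF _ False T(3)] pr by auto
    have xP: "x \<notin> set P" using pr by simp
    have "(\<Union>z\<in>set P. (Tf(x := T1)) z) = T2" using Tf xP by auto
    then show ?thesis using T Tf xP
      by (intro exI[of _ "Tf(x := T1)"]) auto
  qed
qed

lemma big_conj_sat:
  "length Xs = length xs \<Longrightarrow>
   sat (big_conj_eq (zip Xs xs) c) T \<longleftrightarrow> (\<forall>p\<in>T. map (fst p) Xs = xs) \<and> sat c T"
proof (induction Xs arbitrary: xs)
  case Nil then show ?case by simp
next
  case (Cons X Xs)
  then obtain x xs' where xs: "xs = x # xs'" by (cases xs) auto
  then have "length Xs = length xs'" using Cons.prems by simp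
  then show ?case using Cons.IH[of xs'] xs by (auto simp: case_prod_beta)
qed

lemma enum_ran_ok: "signature D R \<Longrightarrow> X \<in> D \<Longrightarrow> distinct (enum_ran R X) \<and> set (enum_ran R X) = R X"
proof -
  assume sig: "signature D R" and X: "X \<in> D"
  then have "finite (R X)" unfolding signature_def by blast
  then obtain l where "set l = R X \<and> distinct l" using finite_distinct_list by blast
  then have "distinct l \<and> set l = R X" by blast
  then show ?thesis unfolding enum_ran_def by (rule someI)
qed

lemma memP:
  assumes sig: "signature D R" and XsD: "set Xs \<subseteq> D"
  shows "xs \<in> set (product_lists (map (enum_ran R) Xs)) \<longleftrightarrow>
         length xs = length Xs \<and> (\<forall>i<length Xs. xs!i \<in> R (Xs!i))"
proof -
  have e: "\<forall>i<length Xs. set (enum_ran R (Xs!i)) = R (Xs!i)"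
    using enum_ran_ok[OF sig] nth_mem XsD by blast
  show ?thesis unfolding product_lists_set using e
    by (auto simp: list_all2_conv_all_nth)
qed

lemma Pne:
  assumes sig: "signature D R" and XsD: "set Xs \<subseteq> D"
  shows "product_lists (map (enum_ran R) Xs) \<noteq> []"
proof -
  let ?x = "map (\<lambda>X. SOME v. v \<in> R X) Xs"
  have "\<forall>i<length Xs. ?x!i \<in> R (Xs!i)"
  proof (intro allI impI)
    fix i assume i: "i < length Xs"
    then have "Xs!i \<in> D" using XsD nth_mem by blast
    then have "R (Xs!i) \<noteq> {}" using sig unfolding signature_def by blast
    then show "?x!i \<in> R (Xs!i)" using i by (simp add: some_in_eq)
  qed
  then have "?x \<in> set (product_lists (map (enum_ran R) Xs))"
    using memP[OF sig XsD] by simp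
  then show ?thesis by auto
qed

lemma distinct_product_lists: "\<forall>l\<in>set xss. distinct l \<Longrightarrow> distinct (product_lists xss)"
proof (induction xss)
  case Nil then show ?case by simp
next
  case (Cons xs xss)
  let ?L = "product_lists xss"
  have dL: "distinct ?L" using Cons by simp
  have dxs: "distinct xs" using Cons.prems by simp
  show ?case
  proof (cases "?L = []")
    case True then show ?thesis by (induct xs) auto
  next
    case False
    have inj: "inj_on (\<lambda>x. map (Cons x) ?L) (set xs)"
    proof (rule inj_onI)
      fix x y assume "map (Cons x) ?L = map (Cons y) ?L"
      then show "x = y" using False by (cases ?L) auto
    qed
    show ?thesis
      unfolding product_lists.simps
    proof (rule distinct_concat)
      show "distinct (map (\<lambda>x. map (Cons x) ?L) xs)"
        using inj dxs by (simp add: distinct_map)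
      show "\<And>ys. ys \<in> set (map (\<lambda>x. map (Cons x) ?L) xs) \<Longrightarrow> distinct ys"
        using dL by (auto simp: distinct_map)
      show "\<And>ys zs. ys \<in> set (map (\<lambda>x. map (Cons x) ?L) xs) \<Longrightarrow>
          zs \<in> set (map (\<lambda>x. map (Cons x) ?L) xs) \<Longrightarrow> ys \<noteq> zs \<Longrightarrow> set ys \<inter> set zs = {}"
        by auto
    qed
  qed
qed

lemma sat_Dep_iff: "sat (Dep Xs Y) T \<longleftrightarrow> (\<forall>p\<in>T. \<forall>q\<in>T. (\<forall>X\<in>set Xs. fst p X = fst q X) \<longrightarrow> fst p Y = fst q Y)"
  by (simp add: case_prod_beta)

lemma dep_star:
  assumes sig: "signature D R" and XsD: "set Xs \<subseteq> D" and ne: "Xs \<noteq> []" and g: "good D R T"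
  shows "sat (Dep Xs Y) T \<longleftrightarrow> sat (star R (Dep Xs Y)) T"
proof -
  define P where "P = product_lists (map (enum_ran R) Xs)"
  define gg where "gg = (\<lambda>xs. big_conj_eq (zip Xs xs) (Dep [] Y :: ('a, 'b) form))"
  have st: "star R (Dep Xs Y) = big_disj (map gg P)" using ne by (simp add: P_def gg_def)
  have mP: "xs \<in> set P \<longleftrightarrow> length xs = length Xs \<and> (\<forall>i<length Xs. xs!i \<in> R (Xs!i))" for xs
    unfolding P_def by (rule memP[OF sig XsD])
  have Pne: "P \<noteq> []" unfolding P_def by (rule Pne[OF sig XsD])
  have distP: "distinct P" unfolding P_def
    by (rule distinct_product_lists) (use enum_ran_ok[OF sig] XsD in auto)
  have sP: "map (fst p) Xs \<in> set P" if "p \<in> T" for p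
  proof -
    have "fst p \<in> PiE D R" using g that unfolding good_def by (cases p) auto
    then show ?thesis unfolding mP using XsD nth_mem by (auto simp: PiE_iff)
  qed
  show ?thesis
  proof
    assume "sat (Dep Xs Y) T"
    then have dep: "\<forall>p\<in>T. \<forall>q\<in>T. (\<forall>X\<in>set Xs. fst p X = fst q X) \<longrightarrow> fst p Y = fst q Y"
    proof (intro ballI impI)
      fix p q assume d: "sat (Dep Xs Y) T" and pq: "p \<in> T" "q \<in> T" and h: "\<forall>X\<in>set Xs. fst p X = fst q X"
      obtain s F where p: "p = (s, F)" by (cases p)
      obtain s' F' where q: "q = (s', F')" by (cases q)
      have "\<forall>(s, F)\<in>T. \<forall>(s', F')\<in>T. (\<forall>X\<in>set Xs. s X = s' X) \<longrightarrow> s Y = s' Y"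
        using d by (simp only: sat.simps)
      then have "case p of (s, F) \<Rightarrow> \<forall>(s', F')\<in>T. (\<forall>X\<in>set Xs. s X = s' X) \<longrightarrow> s Y = s' Y"
        using pq(1) by (rule bspec)
      then have "\<forall>(s', F')\<in>T. (\<forall>X\<in>set Xs. s X = s' X) \<longrightarrow> s Y = s' Y"
        unfolding p by (simp only: prod.case)
      then have "case q of (s', F') \<Rightarrow> (\<forall>X\<in>set Xs. s X = s' X) \<longrightarrow> s Y = s' Y"
        using pq(2) by (rule bspec)
      then have "(\<forall>X\<in>set Xs. s X = s' X) \<longrightarrow> s Y = s' Y"
        unfolding q by (simp only: prod.case)
      then show "fst p Y = fst q Y" using h unfolding p q fst_conv by blast
    qed
    define Tf where "Tf = (\<lambda>xs. {p\<in>T. map (fst p) Xs = xs})"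
    have T: "T = (\<Union>x\<in>set P. Tf x)" using sP by (auto simp: Tf_def)
    have "\<forall>x\<in>set P. sat (gg x) (Tf x)"
    proof
      fix x assume "x \<in> set P"
      then have len: "length Xs = length x" using mP[of x] by simp
      have "sat (Dep [] Y) (Tf x)"
      proof -
        have H1: "fst p Y = fst q Y" if "p \<in> Tf x" "q \<in> Tf x" for p q
        proof -
          have "p \<in> T" "q \<in> T" "map (fst p) Xs = map (fst q) Xs" using that by (auto simp: Tf_def)
          then have "\<forall>X\<in>set Xs. fst p X = fst q X" by (simp add: map_eq_conv)
          then show ?thesis by (rule mp[OF bspec[OF bspec[OF dep \<open>p \<in> T\<close>] \<open>q \<in> T\<close>]])
        qed
        show ?thesis unfolding sat_Dep_iff
        proof (intro ballI impI)
          fix p q assume "p \<in> Tf x" "q \<in> Tf x"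
          then show "fst p Y = fst q Y" by (rule H1)
        qed
      qed
      then show "sat (gg x) (Tf x)" unfolding gg_def big_conj_sat[OF len] by (auto simp: Tf_def)
    qed
    then show "sat (star R (Dep Xs Y)) T" unfolding st by (rule big_disj_intro[OF Pne T])
  next
    assume "sat (star R (Dep Xs Y)) T"
    then have sb: "sat (big_disj (map gg P)) T" unfolding st .
    obtain Tf where T: "T = (\<Union>x\<in>set P. Tf x)" and H: "\<forall>x\<in>set P. sat (gg x) (Tf x)"
      using big_disj_elim[OF distP Pne sb] by blast
    have H2: "fst p Y = fst q Y" if pT: "p \<in> T" and qT: "q \<in> T" and hpq: "\<forall>X\<in>set Xs. fst p X = fst q X" for p q
    proof -
      obtain x where x: "x \<in> set P" "p \<in> Tf x" using pT unfolding T by blast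
      obtain x' where x': "x' \<in> set P" "q \<in> Tf x'" using qT unfolding T by blast
      have l: "length Xs = length x" "length Xs = length x'" using x(1) x'(1) mP by auto
      have "sat (gg x) (Tf x)" using H x(1) by blast
      then have ha: "(\<forall>p\<in>Tf x. map (fst p) Xs = x) \<and> sat (Dep [] Y) (Tf x)"
        unfolding gg_def big_conj_sat[OF l(1)] .
      have "sat (gg x') (Tf x')" using H x'(1) by blast
      then have hb: "(\<forall>p\<in>Tf x'. map (fst p) Xs = x') \<and> sat (Dep [] Y) (Tf x')"
        unfolding gg_def big_conj_sat[OF l(2)] .
      have a: "map (fst p) Xs = x" "sat (Dep [] Y) (Tf x)" using ha x(2) by auto
      have b: "map (fst q) Xs = x'" using hb x'(2) by auto
      have "map (fst p) Xs = map (fst q) Xs" using hpq by (simp only: map_eq_conv)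
      then have "x = x'" using a b by simp
      moreover have "\<forall>p\<in>Tf x. \<forall>q\<in>Tf x. fst p Y = fst q Y" using a(2) unfolding sat_Dep_iff list.set(1) ball_empty by blast
      ultimately show ?thesis using x(2) x'(2) by blast
    qed
    show "sat (Dep Xs Y) T" unfolding sat_Dep_iff
    proof (intro ballI impI)
      fix p q assume "p \<in> T" "q \<in> T" "\<forall>X\<in>set Xs. fst p X = fst q X"
      then show "fst p Y = fst q Y" by (rule H2)
    qed
  qed
qed

lemma star_equiv:
  assumes sig: "signature D R"
  shows "good D R T \<Longrightarrow> is_COD D R \<phi> \<Longrightarrow> sat \<phi> T \<longleftrightarrow> sat (star R \<phi>) T"
proof (induction \<phi> arbitrary: T)
  case (Eq X x) show ?case by simp
next
  case (Dep Xs Y)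
  show ?case
  proof (cases "Xs = []")
    case True then show ?thesis by simp
  next
    case False
    have "set Xs \<subseteq> D" using Dep.prems(2) by simp
    then show ?thesis by (rule dep_star[OF sig _ False Dep.prems(1)])
  qed
next
  case (Neg a)
  have "nodep a" using Neg.prems(2) CO_nodep by simp
  then show ?case by (simp add: nodep_star)
next
  case (And a b)
  have "sat a T \<longleftrightarrow> sat (star R a) T" using And.IH(1)[OF And.prems(1)] And.prems(2) by simp
  moreover have "sat b T \<longleftrightarrow> sat (star R b) T" using And.IH(2)[OF And.prems(1)] And.prems(2) by simp
  ultimately show ?case by simp
next
  case (Or a b)
  have ia: "sat a U \<longleftrightarrow> sat (star R a) U" if "U \<subseteq> T" for U
    using Or.IH(1)[OF good_subset[OF Or.prems(1) that]] Or.prems(2) by simp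
  have ib: "sat b U \<longleftrightarrow> sat (star R b) U" if "U \<subseteq> T" for U
    using Or.IH(2)[OF good_subset[OF Or.prems(1) that]] Or.prems(2) by simp
  show ?case
  proof
    assume "sat (Or a b) T"
    then obtain T1 T2 where T: "T = T1 \<union> T2" "sat a T1" "sat b T2" by auto
    have "sat (star R a) T1" "sat (star R b) T2" using ia[of T1] ib[of T2] T by auto
    then show "sat (star R (Or a b)) T" using T(1) by auto
  next
    assume "sat (star R (Or a b)) T"
    then obtain T1 T2 where T: "T = T1 \<union> T2" "sat (star R a) T1" "sat (star R b) T2" by auto
    have "sat a T1" "sat b T2" using ia[of T1] ib[of T2] T by auto
    then show "sat (Or a b) T" using T(1) by auto
  qed
next
  case (Cf xs a)
  have wa: "wf_asgn D R xs" and ca: "is_COD D R a" using Cf.prems(2) by auto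
  have fin: "finite D" using sig unfolding signature_def by auto
  have "good D R (interv_team xs T)" by (rule good_interv[OF fin Cf.prems(1) wa])
  then have "sat a (interv_team xs T) \<longleftrightarrow> sat (star R a) (interv_team xs T)"
    using Cf.IH ca by blast
  then show ?case by simp
qed

lemma wfp_big_conj: "wfp D R (big_conj_eq ps c) = wfp D R c"
  by (induction ps c rule: big_conj_eq.induct) auto

lemma wfp_big_disj: "L \<noteq> [] \<Longrightarrow> \<forall>a\<in>set L. wfp D R a \<Longrightarrow> wfp D R (big_disj L)"
  by (induction L rule: big_disj.induct) auto

lemma wfp_star:
  assumes sig: "signature D R"
  shows "is_COD D R \<phi> \<Longrightarrow> wfp D R (star R \<phi>)"
proof (induction \<phi>)
  case (Dep Xs Y)
  show ?case
  proof (cases "Xs = []")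
    case True then show ?thesis using Dep by simp
  next
    case False
    have XsD: "set Xs \<subseteq> D" and Y: "Y \<in> D" using Dep by auto
    have ne: "map (\<lambda>xs. big_conj_eq (zip Xs xs) (Dep [] Y)) (product_lists (map (enum_ran R) Xs)) \<noteq> []"
      using Pne[OF sig XsD] by simp
    have "\<forall>a\<in>set (map (\<lambda>xs. big_conj_eq (zip Xs xs) (Dep [] Y)) (product_lists (map (enum_ran R) Xs))).
       wfp D R a" using Y by (auto simp: wfp_big_conj)
    then show ?thesis using False wfp_big_disj[OF ne] by simp
  qed
next
  case (Neg a)
  then have "nodep a" using CO_nodep by simp
  then show ?case by (simp add: nodep_star)
qed auto

definition instk :: "('v \<Rightarrow> 'a set) \<Rightarrow> ('v, 'a) form \<Rightarrow> nat \<Rightarrow> (nat \<Rightarrow> 'a) \<Rightarrow> bool" where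
  "instk R \<psi> k f \<longleftrightarrow> (\<forall>i\<in>{1..length (const_occs \<psi>)}. f (k + i) \<in> R (const_occs \<psi> ! (i - 1)))"

lemma inst_cong:
  "\<forall>i\<in>{1..length (const_occs \<psi>)}. f (k + i) = g (k + i) \<Longrightarrow> full_inst f k \<psi> = full_inst g k \<psi>"
proof (induction \<psi> arbitrary: k)
  case (Dep Xs Y)
  then show ?case by (cases "Xs = []") auto
next
  case (And a b)
  let ?la = "length (const_occs a)"
  have "full_inst f k a = full_inst g k a" using And.prems by (intro And.IH(1)) auto
  moreover have "full_inst f (k + ?la) b = full_inst g (k + ?la) b"
  proof (intro And.IH(2) ballI)
    fix i assume i: "i \<in> {1..length (const_occs b)}"
    then have "?la + i \<in> {1..length (const_occs (And a b))}" by auto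
    then have "f (k + (?la + i)) = g (k + (?la + i))" using And.prems by blast
    then show "f (k + ?la + i) = g (k + ?la + i)" by (simp add: add.assoc)
  qed
  ultimately show ?case by simp
next
  case (Or a b)
  let ?la = "length (const_occs a)"
  have "full_inst f k a = full_inst g k a" using Or.prems by (intro Or.IH(1)) auto
  moreover have "full_inst f (k + ?la) b = full_inst g (k + ?la) b"
  proof (intro Or.IH(2) ballI)
    fix i assume i: "i \<in> {1..length (const_occs b)}"
    then have "?la + i \<in> {1..length (const_occs (Or a b))}" by auto
    then have "f (k + (?la + i)) = g (k + (?la + i))" using Or.prems by blast
    then show "f (k + ?la + i) = g (k + ?la + i)" by (simp add: add.assoc)
  qed
  ultimately show ?case by simp
qed auto

lemma inst_exists:
  assumes sig: "signature D R" and occ: "set (const_occs \<psi>) \<subseteq> D"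
  shows "\<exists>f. instk R \<psi> k f"
proof -
  define f where "f = (\<lambda>i. SOME v. v \<in> R (const_occs \<psi> ! (i - k - 1)))"
  have "f (k + i) \<in> R (const_occs \<psi> ! (i - 1))" if i: "i \<in> {1..length (const_occs \<psi>)}" for i
  proof -
    have "const_occs \<psi> ! (i - 1) \<in> D" using i occ nth_mem[of "i - 1" "const_occs \<psi>"] by auto
    then have "R (const_occs \<psi> ! (i - 1)) \<noteq> {}" using sig unfolding signature_def by blast
    then have "(SOME v. v \<in> R (const_occs \<psi> ! (i - 1))) \<in> R (const_occs \<psi> ! (i - 1))"
      by (simp add: some_in_eq)
    moreover have "k + i - k - 1 = i - 1" by simp
    ultimately show ?thesis unfolding f_def by simp
  qed
  then show ?thesis unfolding instk_def by blast
qed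

lemma combine:
  assumes f1: "instk R a k f1" and f2: "instk R b (k + length (const_occs a)) f2"
  shows "\<exists>f. (\<forall>i\<in>{1..length (const_occs a @ const_occs b)}.
              f (k + i) \<in> R ((const_occs a @ const_occs b) ! (i - 1))) \<and>
            full_inst f k a = full_inst f1 k a \<and>
            full_inst f (k + length (const_occs a)) b = full_inst f2 (k + length (const_occs a)) b"
proof -
  let ?la = "length (const_occs a)"
  define f where "f = (\<lambda>i. if i \<le> k + ?la then f1 i else f2 i)"
  have e1: "full_inst f k a = full_inst f1 k a" by (rule inst_cong) (auto simp: f_def)
  have e2: "full_inst f (k + ?la) b = full_inst f2 (k + ?la) b" by (rule inst_cong) (auto simp: f_def)
  have "\<forall>i\<in>{1..length (const_occs a @ const_occs b)}.
              f (k + i) \<in> R ((const_occs a @ const_occs b) ! (i - 1))"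
  proof
    fix i assume i: "i \<in> {1..length (const_occs a @ const_occs b)}"
    show "f (k + i) \<in> R ((const_occs a @ const_occs b) ! (i - 1))"
    proof (cases "i \<le> ?la")
      case True
      then have "f (k + i) = f1 (k + i)" by (simp add: f_def)
      moreover have "f1 (k + i) \<in> R (const_occs a ! (i - 1))"
        using f1 i True unfolding instk_def by auto
      moreover have "(const_occs a @ const_occs b) ! (i - 1) = const_occs a ! (i - 1)"
        using True i by (auto simp: nth_append)
      ultimately show ?thesis by simp
    next
      case False
      define j where "j = i - ?la"
      have j: "j \<in> {1..length (const_occs b)}" "i = ?la + j" using False i by (auto simp: j_def)
      then have "f (k + i) = f2 (k + ?la + j)" by (simp add: f_def add.assoc)
      moreover have "f2 (k + ?la + j) \<in> R (const_occs b ! (j - 1))"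
        using f2 j(1) unfolding instk_def by blast
      moreover have "(const_occs a @ const_occs b) ! (i - 1) = const_occs b ! (j - 1)"
        using j by (auto simp: nth_append)
      ultimately show ?thesis by simp
    qed
  qed
  then show ?thesis using e1 e2 by blast
qed

lemma key:
  assumes sig: "signature D R"
  shows "good D R T \<Longrightarrow> wfp D R \<psi> \<Longrightarrow> sat \<psi> T \<Longrightarrow> \<exists>f. instk R \<psi> k f \<and> sat (full_inst f k \<psi>) T"
proof (induction \<psi> arbitrary: k T)
  case (Eq X x) then show ?case by (simp add: instk_def)
next
  case (Dep Xs Y)
  have Xs: "Xs = []" and Y: "Y \<in> D" using Dep.prems(2) by auto
  have ne: "R Y \<noteq> {}" using sig Y unfolding signature_def by auto
  define v where "v = (if T = {} then (SOME v. v \<in> R Y) else fst (SOME p. p \<in> T) Y)"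
  have vR: "v \<in> R Y"
  proof (cases "T = {}")
    case True then show ?thesis using ne by (simp add: v_def some_in_eq)
  next
    case False
    then have p0: "(SOME p. p \<in> T) \<in> T" by (simp add: some_in_eq)
    then have "fst (SOME p. p \<in> T) \<in> PiE D R" using Dep.prems(1) unfolding good_def
      by (cases "SOME p. p \<in> T") auto
    then have "fst (SOME p. p \<in> T) Y \<in> R Y" using Y by (rule PiE_mem)
    then show ?thesis using False by (simp add: v_def)
  qed
  have "sat (Eq Y v) T"
  proof (cases "T = {}")
    case True then show ?thesis by simp
  next
    case False
    then have p0: "(SOME p. p \<in> T) \<in> T" by (simp add: some_in_eq)
    have "\<forall>p\<in>T. \<forall>q\<in>T. fst p Y = fst q Y"
      using Dep.prems(3) unfolding Xs sat_Dep_iff list.set(1) ball_empty by blast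
    then have "\<forall>p\<in>T. fst p Y = fst (SOME p. p \<in> T) Y" using p0 by blast
    then have "\<forall>p\<in>T. fst p Y = v" using False unfolding v_def by simp
    then show ?thesis by (auto simp: case_prod_beta)
  qed
  then show ?case using vR Xs by (intro exI[of _ "\<lambda>_. v"]) (simp add: instk_def)
next
  case (Neg a)
  then have "nodep a" by simp
  then show ?case using Neg.prems(3) by (simp add: instk_def nodep_occs nodep_inst)
next
  case (And a b)
  let ?la = "length (const_occs a)"
  have w: "wfp D R a" "wfp D R b" using And.prems(2) by auto
  have s: "sat a T" "sat b T" using And.prems(3) by auto
  obtain f1 where f1: "instk R a k f1" "sat (full_inst f1 k a) T"
    using And.IH(1)[OF And.prems(1) w(1) s(1)] by blast
  obtain f2 where f2: "instk R b (k + ?la) f2" "sat (full_inst f2 (k + ?la) b) T"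
    using And.IH(2)[OF And.prems(1) w(2) s(2)] by blast
  obtain f where f: "\<forall>i\<in>{1..length (const_occs a @ const_occs b)}.
              f (k + i) \<in> R ((const_occs a @ const_occs b) ! (i - 1))"
     "full_inst f k a = full_inst f1 k a" "full_inst f (k + ?la) b = full_inst f2 (k + ?la) b"
    using combine[OF f1(1) f2(1)] by blast
  have "instk R (And a b) k f" using f(1) unfolding instk_def by simp
  moreover have "sat (full_inst f k (And a b)) T" using f(2,3) f1(2) f2(2) by simp
  ultimately show ?case by blast
next
  case (Or a b)
  let ?la = "length (const_occs a)"
  have w: "wfp D R a" "wfp D R b" using Or.prems(2) by auto
  obtain T1 T2 where T: "T = T1 \<union> T2" "sat a T1" "sat b T2" using Or.prems(3) by auto
  have g1: "good D R T1" and g2: "good D R T2" using good_subset[OF Or.prems(1)] T(1) by auto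
  obtain f1 where f1: "instk R a k f1" "sat (full_inst f1 k a) T1"
    using Or.IH(1)[OF g1 w(1) T(2)] by blast
  obtain f2 where f2: "instk R b (k + ?la) f2" "sat (full_inst f2 (k + ?la) b) T2"
    using Or.IH(2)[OF g2 w(2) T(3)] by blast
  obtain f where f: "\<forall>i\<in>{1..length (const_occs a @ const_occs b)}.
              f (k + i) \<in> R ((const_occs a @ const_occs b) ! (i - 1))"
     "full_inst f k a = full_inst f1 k a" "full_inst f (k + ?la) b = full_inst f2 (k + ?la) b"
    using combine[OF f1(1) f2(1)] by blast
  have "instk R (Or a b) k f" using f(1) unfolding instk_def by simp
  moreover have "sat (full_inst f k (Or a b)) T" using f(2,3) f1(2) f2(2) T(1) by auto
  ultimately show ?case by blast
next
  case (Cf xs a)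
  have wa: "wf_asgn D R xs" and w: "wfp D R a" using Cf.prems(2) by auto
  show ?case
  proof (cases "consistent xs")
    case True
    have fin: "finite D" using sig unfolding signature_def by auto
    have g: "good D R (interv_team xs T)" by (rule good_interv[OF fin Cf.prems(1) wa])
    have "sat a (interv_team xs T)" using Cf.prems(3) True by simp
    then obtain f where f: "instk R a k f" "sat (full_inst f k a) (interv_team xs T)"
      using Cf.IH[OF g w] by blast
    have "instk R (Cf xs a) k f" using f(1) unfolding instk_def by simp
    moreover have "sat (full_inst f k (Cf xs a)) T" using f(2) by simp
    ultimately show ?thesis by blast
  next
    case False
    have "set (const_occs (Cf xs a)) \<subseteq> D" using wfp_occs Cf.prems(2) by blast
    then obtain f where "instk R (Cf xs a) k f" using inst_exists[OF sig] by blast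
    moreover have "sat (full_inst f k (Cf xs a)) T" using False by simp
    ultimately show ?thesis by blast
  qed
qed

theorem corollary5p17:
  fixes Dom :: "'v set" and Ran :: "'v \<Rightarrow> 'a set"
    and \<Delta> :: "('v, 'a) form set" and \<phi> :: "('v, 'a) form"
  assumes "signature Dom Ran"
    and "\<forall>\<delta>\<in>\<Delta>. is_CO Dom Ran \<delta>"
    and "is_COD Dom Ran \<phi>"
  shows "entails Dom Ran \<Delta> \<phi> \<longleftrightarrow>
    (\<exists>f. inst_fun Ran (star Ran \<phi>) f \<and>
         entails Dom Ran \<Delta> (full_inst f 0 (star Ran \<phi>)))"
proof -
  note sig = assms(1)
  have ndD: "\<forall>\<delta>\<in>\<Delta>. nodep \<delta>" using assms(2) CO_nodep by blast
  let ?\<psi> = "star Ran \<phi>"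
  have w: "wfp Dom Ran ?\<psi>" by (rule wfp_star[OF sig assms(3)])
  have ik: "instk Ran ?\<psi> 0 f \<longleftrightarrow> inst_fun Ran ?\<psi> f" for f
    unfolding instk_def inst_fun_def by simp
  show ?thesis
  proof
    assume ent: "entails Dom Ran \<Delta> \<phi>"
    show "\<exists>f. inst_fun Ran ?\<psi> f \<and> entails Dom Ran \<Delta> (full_inst f 0 ?\<psi>)"
    proof (rule ccontr)
      assume na: "\<not> (\<exists>f. inst_fun Ran ?\<psi> f \<and> entails Dom Ran \<Delta> (full_inst f 0 ?\<psi>))"
      have "\<forall>f. \<exists>T. inst_fun Ran ?\<psi> f \<longrightarrow> (gen_causal_team Dom Ran T \<and> (\<forall>\<delta>\<in>\<Delta>. sat \<delta> T) \<and>
                \<not> sat (full_inst f 0 ?\<psi>) T)"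
        using na unfolding entails_def by blast
      then have "\<exists>Tf. \<forall>f. inst_fun Ran ?\<psi> f \<longrightarrow> (gen_causal_team Dom Ran (Tf f) \<and> (\<forall>\<delta>\<in>\<Delta>. sat \<delta> (Tf f)) \<and>
                \<not> sat (full_inst f 0 ?\<psi>) (Tf f))" by (rule choice)
      then obtain Tf where Tf0: "\<forall>f. inst_fun Ran ?\<psi> f \<longrightarrow> (gen_causal_team Dom Ran (Tf f) \<and> (\<forall>\<delta>\<in>\<Delta>. sat \<delta> (Tf f)) \<and>
                \<not> sat (full_inst f 0 ?\<psi>) (Tf f))" by blast
      have Tf: "\<And>f. inst_fun Ran ?\<psi> f \<Longrightarrow> gen_causal_team Dom Ran (Tf f) \<and>
                (\<forall>\<delta>\<in>\<Delta>. sat \<delta> (Tf f)) \<and> \<not> sat (full_inst f 0 ?\<psi>) (Tf f)"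
        using Tf0 by blast
      define T where "T = (\<Union>f\<in>{f. inst_fun Ran ?\<psi> f}. Tf f)"
      have gT: "gen_causal_team Dom Ran T"
        unfolding gen_causal_team_def
      proof
        fix p assume "p \<in> T"
        then obtain f where f: "inst_fun Ran ?\<psi> f" "p \<in> Tf f" unfolding T_def by blast
        then show "case p of (s, F) \<Rightarrow> sys_of_funs Dom Ran F \<and> compatible Dom Ran s F"
          using Tf[OF f(1)] unfolding gen_causal_team_def by blast
      qed
      have dT: "\<forall>\<delta>\<in>\<Delta>. sat \<delta> T"
      proof
        fix \<delta> assume d: "\<delta> \<in> \<Delta>"
        have nd: "nodep \<delta>" using ndD d by blast
        have "\<forall>p\<in>T. sat \<delta> {p}"
        proof
          fix p assume "p \<in> T"
          then obtain f where f: "inst_fun Ran ?\<psi> f" "p \<in> Tf f" unfolding T_def by blast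
          have "sat \<delta> (Tf f)" using Tf[OF f(1)] d by blast
          then show "sat \<delta> {p}" using flat[OF nd, of "Tf f"] f(2) by blast
        qed
        then show "sat \<delta> T" using flat[OF nd, of T] by blast
      qed
      have "sat \<phi> T" using ent gT dT unfolding entails_def by blast
      moreover have gd: "good Dom Ran T" by (rule gct_good[OF gT])
      ultimately have "sat ?\<psi> T" using star_equiv[OF sig gd assms(3)] by blast
      then obtain f where f: "instk Ran ?\<psi> 0 f" "sat (full_inst f 0 ?\<psi>) T"
        using key[OF sig gd w] by blast
      have fi: "inst_fun Ran ?\<psi> f" using f(1) ik by blast
      have nd: "nodep (full_inst f 0 ?\<psi>)" by (rule wfp_inst_nodep[OF w])
      have "\<forall>p\<in>T. sat (full_inst f 0 ?\<psi>) {p}" using f(2) flat[OF nd, of T] by blast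
      moreover have "Tf f \<subseteq> T" using fi unfolding T_def by blast
      ultimately have "\<forall>p\<in>Tf f. sat (full_inst f 0 ?\<psi>) {p}" by blast
      then have "sat (full_inst f 0 ?\<psi>) (Tf f)" using flat[OF nd, of "Tf f"] by blast
      then show False using Tf[OF fi] by blast
    qed
  next
    assume "\<exists>f. inst_fun Ran ?\<psi> f \<and> entails Dom Ran \<Delta> (full_inst f 0 ?\<psi>)"
    then obtain f where f: "entails Dom Ran \<Delta> (full_inst f 0 ?\<psi>)" by blast
    show "entails Dom Ran \<Delta> \<phi>"
      unfolding entails_def
    proof (intro allI impI)
      fix T assume gT: "gen_causal_team Dom Ran T" and dT: "\<forall>\<delta>\<in>\<Delta>. sat \<delta> T"
      have "sat (full_inst f 0 ?\<psi>) T" using f gT dT unfolding entails_def by blast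
      then have "sat ?\<psi> T" by (rule inst_mono[OF w])
      then show "sat \<phi> T" using star_equiv[OF sig gct_good[OF gT] assms(3)] by blast
    qed
  qed
qed

end
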